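(* Let $S_n=(E_{n-m},K_m)$ be a split graph on $n$ vertices such that each vertex $v$ of $K_m$ has degree at most $m$ in $S_n$ (i.e. the degree of $v$ is $m-1$ or $m$). Then $S_n$ is word-representable.
   Context: A graph $G=(V,E)$ is word-representable if there exists a word $w$ over the alphabet $V$ such that for all distinct $x,y\in V$, the letters $x$ and $y$ alternate in $w$ if and only if $xy\in E$ (alternation meaning that deleting all letters other than $x$ and $y$ leaves $xyxy\cdots$ or $yxyx\cdots$). The notation $S_n=(E_{n-m},K_m)$ denotes a split graph on $n$ vertices whose vertex set is partitioned into a maximal clique $K_m$ on $m$ vertices and an independent set $E_{n-m}$ on $n-m$ vertices (so each vertex of $E_{n-m}$ has degree at most $m-1$). *)

theory Defs
  imports Main
begin

definition simple_graph :: "'a set \<Rightarrow> ('a \<Rightarrow> 'a \<Rightarrow> bool) \<Rightarrow> bool" where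
  "simple_graph V E \<longleftrightarrow> finite V \<and>
     (\<forall>x y. E x y \<longrightarrow> x \<in> V \<and> y \<in> V \<and> x \<noteq> y) \<and>
     (\<forall>x y. E x y \<longrightarrow> E y x)"

definition degree :: "'a set \<Rightarrow> ('a \<Rightarrow> 'a \<Rightarrow> bool) \<Rightarrow> 'a \<Rightarrow> nat" where
  "degree V E v = card {u \<in> V. E v u}"

definition is_clique :: "'a set \<Rightarrow> ('a \<Rightarrow> 'a \<Rightarrow> bool) \<Rightarrow> 'a set \<Rightarrow> bool" where
  "is_clique V E K \<longleftrightarrow> K \<subseteq> V \<and> (\<forall>x\<in>K. \<forall>y\<in>K. x \<noteq> y \<longrightarrow> E x y)"

definition is_maximal_clique :: "'a set \<Rightarrow> ('a \<Rightarrow> 'a \<Rightarrow> bool) \<Rightarrow> 'a set \<Rightarrow> bool" where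
  "is_maximal_clique V E K \<longleftrightarrow> is_clique V E K \<and>
     (\<forall>v \<in> V - K. \<not> (\<forall>x\<in>K. E v x))"

definition is_independent :: "'a set \<Rightarrow> ('a \<Rightarrow> 'a \<Rightarrow> bool) \<Rightarrow> 'a set \<Rightarrow> bool" where
  "is_independent V E I \<longleftrightarrow> I \<subseteq> V \<and> (\<forall>x\<in>I. \<forall>y\<in>I. \<not> E x y)"

definition alternate :: "'a list \<Rightarrow> 'a \<Rightarrow> 'a \<Rightarrow> bool" where
  "alternate w x y \<longleftrightarrow>
     (let u = filter (\<lambda>z. z = x \<or> z = y) w in
      \<forall>i. Suc i < length u \<longrightarrow> u ! i \<noteq> u ! Suc i)"

definition word_representable :: "'a set \<Rightarrow> ('a \<Rightarrow> 'a \<Rightarrow> bool) \<Rightarrow> bool" where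
  "word_representable V E \<longleftrightarrow> (\<exists>w. set w = V \<and>
     (\<forall>x\<in>V. \<forall>y\<in>V. x \<noteq> y \<longrightarrow> (alternate w x y \<longleftrightarrow> E x y)))"

end

theory Submission
  imports Defs
begin

lemma alt_sym: "alternate w x y = alternate w y x"
proof -
  have "(\<lambda>z. z = x \<or> z = y) = (\<lambda>z. z = y \<or> z = x)" by auto
  then show ?thesis unfolding alternate_def by simp
qed

lemma alt_bad:
  assumes "x \<notin> set w2" "y \<notin> set w2"
  shows "\<not> alternate (w1 @ x # w2 @ x # w3) x y"
proof
  let ?P = "\<lambda>z. z = x \<or> z = y"
  assume a: "alternate (w1 @ x # w2 @ x # w3) x y"
  have "filter ?P w2 = []" using assms by (auto simp: filter_empty_conv)
  then have eq: "filter ?P (w1 @ x # w2 @ x # w3) = filter ?P w1 @ x # x # filter ?P w3" by simp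
  let ?i = "length (filter ?P w1)"
  have "Suc ?i < length (filter ?P (w1 @ x # w2 @ x # w3))" using eq by simp
  then have "filter ?P (w1 @ x # w2 @ x # w3) ! ?i \<noteq> filter ?P (w1 @ x # w2 @ x # w3) ! Suc ?i"
    using a unfolding alternate_def Let_def by blast
  then show False using eq by (simp add: nth_append)
qed

lemma alt_good:
  assumes "p \<noteq> q" "filter (\<lambda>z. z = x \<or> z = y) w = [p,q,p,q]"
  shows "alternate w x y"
  unfolding alternate_def Let_def assms(2)
proof (intro allI impI)
  fix i assume "Suc i < length [p,q,p,q]"
  then have "i = 0 \<or> i = 1 \<or> i = 2" by auto
  then show "[p,q,p,q] ! i \<noteq> [p,q,p,q] ! Suc i" using assms(1) by auto
qed

lemma filter_one: "distinct s \<Longrightarrow> x \<in> set s \<Longrightarrow> filter (\<lambda>z. z = x) s = [x]"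
proof (induction s)
  case Nil then show ?case by simp
next
  case (Cons a s)
  show ?case
  proof (cases "a = x")
    case True
    then have "filter (\<lambda>z. z = x) s = []" using Cons.prems by (auto simp: filter_empty_conv)
    then show ?thesis using True by simp
  next
    case False then show ?thesis using Cons by auto
  qed
qed

lemma filter_two:
  assumes "distinct s" "x \<in> set s" "y \<in> set s" "x \<noteq> y"
  shows "\<exists>p q. p \<noteq> q \<and> filter (\<lambda>z. z = x \<or> z = y) s = [p,q]"
proof -
  let ?f = "filter (\<lambda>z. z = x \<or> z = y) s"
  have d: "distinct ?f" using assms by simp
  have st: "set ?f = {x,y}" using assms by auto
  have "length ?f = 2" using distinct_card[OF d] st assms(4) by simp
  then obtain p q where pq: "?f = [p,q]"
    by (metis (no_types, lifting) One_nat_def Suc_1 length_0_conv length_Suc_conv)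
  then show ?thesis using d by auto
qed

theorem theorem10:
  fixes V K I :: "'a set" and E :: "'a \<Rightarrow> 'a \<Rightarrow> bool"
  assumes "simple_graph V E"
    and "K \<union> I = V" and "K \<inter> I = {}"
    and "is_maximal_clique V E K"
    and "is_independent V E I"
    and "\<forall>v\<in>K. degree V E v \<le> card K"
  shows "word_representable V E"
proof -
  have finV: "finite V" and Ein: "\<And>x y. E x y \<Longrightarrow> x \<in> V \<and> y \<in> V \<and> x \<noteq> y"
    and Esym: "\<And>x y. E x y \<Longrightarrow> E y x"
    using assms(1) unfolding simple_graph_def by auto
  have finK: "finite K" and finI: "finite I" using finV assms(2) by auto
  have cl: "\<And>x y. x \<in> K \<Longrightarrow> y \<in> K \<Longrightarrow> x \<noteq> y \<Longrightarrow> E x y"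
    using assms(4) unfolding is_maximal_clique_def is_clique_def by auto
  have ind: "\<And>x y. x \<in> I \<Longrightarrow> y \<in> I \<Longrightarrow> \<not> E x y"
    using assms(5) unfolding is_independent_def by auto
  have uniq: "a = b" if k: "k \<in> K" and a: "a \<in> I" and b: "b \<in> I" and ea: "E a k" and eb: "E b k" for k a b
  proof (rule ccontr)
    assume ne: "a \<noteq> b"
    have aK: "a \<notin> K" "b \<notin> K" using a b assms(3) by auto
    have sub: "(K - {k}) \<union> {a,b} \<subseteq> {u \<in> V. E k u}"
      using cl k ea eb Esym assms(2) a b by auto
    have "card ((K - {k}) \<union> {a,b}) = card (K - {k}) + card {a,b}"
      by (rule card_Un_disjoint) (use finK aK in auto)
    also have "\<dots> = card K - 1 + 2" using k finK ne by simp
    finally have c: "card ((K - {k}) \<union> {a,b}) = card K + 1"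
      using k finK by (metis Suc_diff_1 card_gt_0_iff empty_iff add_2_eq_Suc add.commute plus_1_eq_Suc)
    have "card ((K - {k}) \<union> {a,b}) \<le> card {u \<in> V. E k u}"
      by (rule card_mono) (use finV sub in auto)
    then have "card K + 1 \<le> degree V E k" unfolding degree_def using c by simp
    then show False using assms(6) k by auto
  qed
  obtain ks where ks: "distinct ks" "set ks = K" using finite_distinct_list[OF finK] by blast
  obtain js where js: "distinct js" "set js = I" using finite_distinct_list[OF finI] by blast
  define N where "N a = filter (\<lambda>k. E a k) ks" for a
  define B where "B a = a # N a @ [a]" for a
  define R where "R = filter (\<lambda>k. \<not> (\<exists>a\<in>I. E a k)) ks"
  define u where "u = concat (map B js) @ R"
  define \<sigma> where "\<sigma> = filter (\<lambda>z. z \<in> K) u"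
  define w where "w = u @ \<sigma>"
  have setN: "set (N a) = {k \<in> K. E a k}" for a using ks by (auto simp: N_def)
  have distN: "distinct (N a)" for a using ks by (simp add: N_def)
  have setR: "set R = {k \<in> K. \<not> (\<exists>a\<in>I. E a k)}" using ks by (auto simp: R_def)
  have IK: "\<And>a. a \<in> I \<Longrightarrow> a \<notin> K" using assms(3) by auto
  have fB: "filter (\<lambda>z. z \<in> K) (B a) = N a" if "a \<in> I" for a
  proof -
    have "filter (\<lambda>z. z \<in> K) (N a) = N a" using setN by (auto simp: filter_id_conv)
    then show ?thesis using IK[OF that] by (simp add: B_def)
  qed
  have fR: "filter (\<lambda>z. z \<in> K) R = R" using setR by (auto simp: filter_id_conv)
  have sig: "\<sigma> = concat (map N js) @ R"
  proof -
    have "map (\<lambda>a. filter (\<lambda>z. z \<in> K) (B a)) js = map N js"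
      using fB js(2) by (intro map_cong) auto
    then show ?thesis unfolding \<sigma>_def u_def by (simp add: filter_concat fR comp_def del: map_eq_conv)
  qed
  have cN: "distinct (concat (map N xs)) \<and> set (concat (map N xs)) = {k \<in> K. \<exists>a\<in>set xs. E a k}"
    if "distinct xs" "set xs \<subseteq> I" for xs
    using that
  proof (induction xs)
    case Nil then show ?case by simp
  next
    case (Cons a xs)
    then have IH: "distinct (concat (map N xs))" "set (concat (map N xs)) = {k \<in> K. \<exists>a\<in>set xs. E a k}"
      by auto
    have "set (N a) \<inter> set (concat (map N xs)) = {}"
    proof (rule ccontr)
      assume "set (N a) \<inter> set (concat (map N xs)) \<noteq> {}"
      then obtain k b where "k \<in> K" "E a k" "b \<in> set xs" "E b k" using IH(2) setN by blast
      then show False using uniq[of k a b] Cons.prems by auto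
    qed
    then show ?case using IH distN[of a] setN[of a] by auto
  qed
  have distS: "distinct \<sigma>"
  proof -
    have "distinct (concat (map N js))" and s: "set (concat (map N js)) = {k \<in> K. \<exists>a\<in>I. E a k}"
      using cN[of js] js by auto
    moreover have "distinct R" using ks by (simp add: R_def)
    ultimately show ?thesis unfolding sig using setR by auto
  qed
  have setS: "set \<sigma> = K"
    using cN[of js] js setR unfolding sig by auto
  have setu: "set u = I \<union> K"
  proof -
    have "set u = set js \<union> set (concat (map N js)) \<union> set R"
      unfolding u_def B_def by auto
    also have "\<dots> = I \<union> K" using cN[of js] js setR by auto
    finally show ?thesis .
  qed
  have setw: "set w = V" unfolding w_def using setu setS assms(2) by auto
  have KK: "alternate w x y" if xyK: "x \<in> K" "y \<in> K" "x \<noteq> y" for x y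
  proof -
    let ?P = "\<lambda>z. z = x \<or> z = y"
    have "filter ?P \<sigma> = filter ?P u" unfolding \<sigma>_def using xyK
      by (auto simp: filter_filter intro!: filter_cong)
    moreover obtain p q where "p \<noteq> q" "filter ?P \<sigma> = [p,q]"
      using filter_two[OF distS, of x y] setS xyK by auto
    ultimately show ?thesis by (intro alt_good[of p q]) (auto simp: w_def)
  qed
  have IV: "alternate w a z \<longleftrightarrow> E a z" if a: "a \<in> I" and z: "z \<in> V" and ne: "a \<noteq> z" for a z
  proof -
    obtain j1 j2 where jsp: "js = j1 @ a # j2" using split_list js(2) a by metis
    have aj: "a \<notin> set j1" "a \<notin> set j2" using js(1) jsp by auto
    have j12: "set j1 \<subseteq> I" "set j2 \<subseteq> I" using js(2) jsp by auto
    have wf: "w = concat (map B j1) @ a # N a @ a # (concat (map B j2) @ R @ \<sigma>)"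
      unfolding w_def u_def jsp by (simp add: B_def)
    show ?thesis
    proof (cases "E a z")
      case False
      have "z \<notin> set (N a)" "a \<notin> set (N a)" using False setN IK[OF a] by auto
      then show ?thesis using alt_bad wf False by metis
    next
      case True
      have zK: "z \<in> K" using True ind a z assms(2) by auto
      let ?P = "\<lambda>t. t = a \<or> t = z"
      have e1: "filter ?P (concat (map B j)) = []" if "set j \<subseteq> I" "a \<notin> set j" for j
        unfolding filter_empty_conv
      proof
        fix t assume "t \<in> set (concat (map B j))"
        then obtain b where b: "b \<in> set j" "t \<in> set (B b)" by auto
        have bI: "b \<in> I" "b \<noteq> a" using b that by auto
        show "\<not> ?P t"
        proof
          assume Pt: "?P t"
          from b(2) have "t = b \<or> t \<in> set (N b)" by (auto simp: B_def)
          then show False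
          proof
            assume "t = b" then show False using Pt bI IK zK by auto
          next
            assume tN: "t \<in> set (N b)"
            then have "t \<in> K" "E b t" using setN by auto
            then show False using Pt IK[OF a] uniq[of z a b] True a bI by auto
          qed
        qed
      qed
      have eR: "filter ?P R = []" using setR True a IK[OF a] by (auto simp: filter_empty_conv)
      have fN: "filter ?P (N a) = [z]"
      proof -
        have "filter ?P (N a) = filter (\<lambda>t. t = z) (N a)"
          using setN IK[OF a] by (auto intro!: filter_cong)
        also have "\<dots> = [z]" using filter_one[OF distN] setN zK True by auto
        finally show ?thesis .
      qed
      have fS: "filter ?P \<sigma> = [z]"
      proof -
        have "filter ?P \<sigma> = filter (\<lambda>t. t = z) \<sigma>"
          using setS IK[OF a] by (auto intro!: filter_cong)
        also have "\<dots> = [z]" using filter_one[OF distS] setS zK by auto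
        finally show ?thesis .
      qed
      have "filter ?P w = [a,z,a,z]"
        unfolding wf using e1[OF j12(1) aj(1)] e1[OF j12(2) aj(2)] eR fN fS by simp
      then show ?thesis using alt_good[of a z] ne True by auto
    qed
  qed
  show ?thesis unfolding word_representable_def
  proof (intro exI conjI ballI impI)
    show "set w = V" by (rule setw)
  next
    fix x y assume x: "x \<in> V" and y: "y \<in> V" and ne: "x \<noteq> y"
    show "alternate w x y \<longleftrightarrow> E x y"
    proof (cases "x \<in> I")
      case True then show ?thesis using IV y ne by auto
    next
      case xn: False
      show ?thesis
      proof (cases "y \<in> I")
        case True
        then have "alternate w y x \<longleftrightarrow> E y x" using IV x ne by auto
        then show ?thesis using alt_sym Esym by metis
      next
        case False
        then have "x \<in> K" "y \<in> K" using xn x y assms(2) by auto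
        then show ?thesis using KK cl ne by auto
      qed
    qed
  qed
qed

end
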